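(* Let $\Gamma$ be a Hintikka set for $\mathbb{T}_1$. Then there exists $\nu\in\mathcal{F}_{C_1}$ such that $\nu(\varphi)=L$ for every signed formula $\mathsf{L}(\varphi)\in\Gamma$ (where the label $\mathsf{T},\mathsf{t},\mathsf{F}$ corresponds to the value $T,t,F$).
   Context: $\Sigma$ has unary $\neg$ and binary $\wedge,\vee,\to$. $\mathcal{A}_{C_1}$ is the $\Sigma$-multialgebra on $\{F,t,T\}$, $D=\{t,T\}$: $F\tilde\vee F=\{F\}$, $F\tilde\vee T=T\tilde\vee F=T\tilde\vee T=\{T\}$, $x\tilde\vee y=D$ if $t\in\{x,y\}$; $x\tilde\wedge y=\{F\}$ if $F\in\{x,y\}$, $T\tilde\wedge T=\{T\}$, $t\tilde\wedge t=t\tilde\wedge T=T\tilde\wedge t=D$; $\tilde\neg F=\{T\}$, $\tilde\neg t=D$, $\tilde\neg T=\{F\}$; $F\tilde\to F=F\tilde\to T=T\tilde\to T=\{T\}$, $t\tilde\to F=T\tilde\to F=\{F\}$, $x\tilde\to t=D$, $t\tilde\to T=D$. Valuations: maps $\nu$ from formulas to $\{F,t,T\}$ with $\nu(\neg\alpha)\in\tilde\neg\nu(\alpha)$, $\nu(\alpha\#\beta)\in\nu(\alpha)\tilde\#\nu(\beta)$; $\mathcal{F}_{C_1}$ = valuations with $\nu(\alpha)=t\Rightarrow\nu(\alpha\wedge\neg\alpha)=T$. Signed formulas are $\mathsf{L}(\varphi)$ with $\mathsf{L}\in\{\mathsf{T},\mathsf{t},\mathsf{F}\}$. A nonempty set $\Gamma$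 of signed formulas is a Hintikka set for $\mathbb{T}_1$ if: (1) $\mathsf{L}(\varphi),\mathsf{L}'(\varphi)\in\Gamma$ imply $\mathsf{L}=\mathsf{L}'$; (2) no $\mathsf{t}(\varphi\wedge\neg\varphi)$ is in $\Gamma$; (3) $\mathsf{T}(\neg\varphi)\in\Gamma\Rightarrow\mathsf{F}(\varphi)\in\Gamma$ or $\mathsf{t}(\varphi)\in\Gamma$; (4) $\mathsf{t}(\neg\varphi)\in\Gamma\Rightarrow\mathsf{t}(\varphi)\in\Gamma$; (5) $\mathsf{F}(\neg\varphi)\in\Gamma\Rightarrow\mathsf{T}(\varphi)\in\Gamma$; (6) $\mathsf{T}(\varphi\wedge\psi)\in\Gamma\Rightarrow$ $\Gamma$ contains $\mathsf{X}(\varphi)$ and $\mathsf{Y}(\psi)$ for some $\mathsf{X},\mathsf{Y}\in\{\mathsf{T},\mathsf{t}\}$; (7) $\mathsf{t}(\varphi\wedge\psi)\in\Gamma\Rightarrow$ $\Gamma$ contains $\mathsf{T}\varphi,\mathsf{t}\psi$, or $\mathsf{t}\varphi,\mathsf{T}\psi$, or $\mathsf{t}\varphi,\mathsf{t}\psi$; (8) $\mathsf{F}(\varphi\wedge\psi)\in\Gamma\Rightarrow\mathsf{F}(\varphi)\in\Gamma$ or $\mathsf{F}(\psi)\in\Gamma$; (9) $\mathsf{T}(\varphi\vee\psi)\in\Gamma\Rightarrow$ one of $\mathsf{T}\varphi,\mathsf{t}\varphi,\mathsf{T}\psi,\mathsf{t}\psi$ is in $\Gamma$; (10) $\mathsf{t}(\varphi\vee\psi)\in\Gamma\Rightarrow\mathsf{t}(\varphi)\in\Gamma$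 or $\mathsf{t}(\psi)\in\Gamma$; (11) $\mathsf{F}(\varphi\vee\psi)\in\Gamma\Rightarrow\mathsf{F}(\varphi),\mathsf{F}(\psi)\in\Gamma$; (12) $\mathsf{T}(\varphi\to\psi)\in\Gamma\Rightarrow$ one of $\mathsf{F}\varphi,\mathsf{T}\psi,\mathsf{t}\psi$ is in $\Gamma$; (13) $\mathsf{t}(\varphi\to\psi)\in\Gamma\Rightarrow$ either $\mathsf{t}\varphi,\mathsf{T}\psi\in\Gamma$ or $\mathsf{t}\psi\in\Gamma$; (14) $\mathsf{F}(\varphi\to\psi)\in\Gamma\Rightarrow$ either $\mathsf{T}\varphi,\mathsf{F}\psi\in\Gamma$ or $\mathsf{t}\varphi,\mathsf{F}\psi\in\Gamma$. *)

theory Defs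
  imports Main
begin

datatype 'v fm = Var 'v | Neg "'v fm" | Conj "'v fm" "'v fm" | Disj "'v fm" "'v fm" | Imp "'v fm" "'v fm"

datatype tv = Fv | tv | Tv

definition Des :: "tv set" where "Des = {tv, Tv}"

fun mor :: "tv \<Rightarrow> tv \<Rightarrow> tv set" where
  "mor Fv Fv = {Fv}"
| "mor Fv Tv = {Tv}"
| "mor Tv Fv = {Tv}"
| "mor Tv Tv = {Tv}"
| "mor _ _ = Des"

fun mand :: "tv \<Rightarrow> tv \<Rightarrow> tv set" where
  "mand Fv _ = {Fv}"
| "mand _ Fv = {Fv}"
| "mand Tv Tv = {Tv}"
| "mand _ _ = Des"

fun mneg :: "tv \<Rightarrow> tv set" where
  "mneg Fv = {Tv}"
| "mneg tv = Des"
| "mneg Tv = {Fv}"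

fun mimp :: "tv \<Rightarrow> tv \<Rightarrow> tv set" where
  "mimp Fv Fv = {Tv}"
| "mimp Fv Tv = {Tv}"
| "mimp Tv Tv = {Tv}"
| "mimp tv Fv = {Fv}"
| "mimp Tv Fv = {Fv}"
| "mimp _ tv = Des"
| "mimp tv Tv = Des"

definition valuation :: "('v fm \<Rightarrow> tv) \<Rightarrow> bool" where
  "valuation \<nu> \<longleftrightarrow>
     (\<forall>a. \<nu> (Neg a) \<in> mneg (\<nu> a)) \<and>
     (\<forall>a b. \<nu> (Conj a b) \<in> mand (\<nu> a) (\<nu> b)) \<and>
     (\<forall>a b. \<nu> (Disj a b) \<in> mor (\<nu> a) (\<nu> b)) \<and>
     (\<forall>a b. \<nu> (Imp a b) \<in> mimp (\<nu> a) (\<nu> b))"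

definition FC1 :: "('v fm \<Rightarrow> tv) set" where
  "FC1 = {\<nu>. valuation \<nu> \<and> (\<forall>a. \<nu> a = tv \<longrightarrow> \<nu> (Conj a (Neg a)) = Tv)}"

type_synonym 'v sfm = "tv \<times> 'v fm"

definition hintikka :: "'v sfm set \<Rightarrow> bool" where
  "hintikka \<Gamma> \<longleftrightarrow> \<Gamma> \<noteq> {} \<and>
   (\<forall>L L' \<phi>. (L, \<phi>) \<in> \<Gamma> \<longrightarrow> (L', \<phi>) \<in> \<Gamma> \<longrightarrow> L = L') \<and>
   (\<forall>\<phi>. (tv, Conj \<phi> (Neg \<phi>)) \<notin> \<Gamma>) \<and>
   (\<forall>\<phi>. (Tv, Neg \<phi>) \<in> \<Gamma> \<longrightarrow> (Fv, \<phi>) \<in> \<Gamma> \<or> (tv, \<phi>) \<in> \<Gamma>) \<and>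
   (\<forall>\<phi>. (tv, Neg \<phi>) \<in> \<Gamma> \<longrightarrow> (tv, \<phi>) \<in> \<Gamma>) \<and>
   (\<forall>\<phi>. (Fv, Neg \<phi>) \<in> \<Gamma> \<longrightarrow> (Tv, \<phi>) \<in> \<Gamma>) \<and>
   (\<forall>\<phi> \<psi>. (Tv, Conj \<phi> \<psi>) \<in> \<Gamma> \<longrightarrow>
      (\<exists>X Y. X \<in> {Tv, tv} \<and> Y \<in> {Tv, tv} \<and> (X, \<phi>) \<in> \<Gamma> \<and> (Y, \<psi>) \<in> \<Gamma>)) \<and>
   (\<forall>\<phi> \<psi>. (tv, Conj \<phi> \<psi>) \<in> \<Gamma> \<longrightarrow>
      ((Tv, \<phi>) \<in> \<Gamma> \<and> (tv, \<psi>) \<in> \<Gamma>) \<or> ((tv, \<phi>) \<in> \<Gamma> \<and> (Tv, \<psi>) \<in> \<Gamma>) \<or>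
      ((tv, \<phi>) \<in> \<Gamma> \<and> (tv, \<psi>) \<in> \<Gamma>)) \<and>
   (\<forall>\<phi> \<psi>. (Fv, Conj \<phi> \<psi>) \<in> \<Gamma> \<longrightarrow> (Fv, \<phi>) \<in> \<Gamma> \<or> (Fv, \<psi>) \<in> \<Gamma>) \<and>
   (\<forall>\<phi> \<psi>. (Tv, Disj \<phi> \<psi>) \<in> \<Gamma> \<longrightarrow>
      (Tv, \<phi>) \<in> \<Gamma> \<or> (tv, \<phi>) \<in> \<Gamma> \<or> (Tv, \<psi>) \<in> \<Gamma> \<or> (tv, \<psi>) \<in> \<Gamma>) \<and>
   (\<forall>\<phi> \<psi>. (tv, Disj \<phi> \<psi>) \<in> \<Gamma> \<longrightarrow> (tv, \<phi>) \<in> \<Gamma> \<or> (tv, \<psi>) \<in> \<Gamma>) \<and>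
   (\<forall>\<phi> \<psi>. (Fv, Disj \<phi> \<psi>) \<in> \<Gamma> \<longrightarrow> (Fv, \<phi>) \<in> \<Gamma> \<and> (Fv, \<psi>) \<in> \<Gamma>) \<and>
   (\<forall>\<phi> \<psi>. (Tv, Imp \<phi> \<psi>) \<in> \<Gamma> \<longrightarrow>
      (Fv, \<phi>) \<in> \<Gamma> \<or> (Tv, \<psi>) \<in> \<Gamma> \<or> (tv, \<psi>) \<in> \<Gamma>) \<and>
   (\<forall>\<phi> \<psi>. (tv, Imp \<phi> \<psi>) \<in> \<Gamma> \<longrightarrow>
      ((tv, \<phi>) \<in> \<Gamma> \<and> (Tv, \<psi>) \<in> \<Gamma>) \<or> (tv, \<psi>) \<in> \<Gamma>) \<and>
   (\<forall>\<phi> \<psi>. (Fv, Imp \<phi> \<psi>) \<in> \<Gamma> \<longrightarrow>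
      ((Tv, \<phi>) \<in> \<Gamma> \<and> (Fv, \<psi>) \<in> \<Gamma>) \<or> ((tv, \<phi>) \<in> \<Gamma> \<and> (Fv, \<psi>) \<in> \<Gamma>))"

end

theory Submission
  imports Defs
begin

definition pick :: "tv set \<Rightarrow> tv" where
  "pick S = (if Tv \<in> S then Tv else if Fv \<in> S then Fv else tv)"

definition lab :: "'v sfm set \<Rightarrow> 'v fm \<Rightarrow> tv" where
  "lab \<Gamma> \<phi> = (THE L. (L, \<phi>) \<in> \<Gamma>)"

fun nu :: "'v sfm set \<Rightarrow> 'v fm \<Rightarrow> tv" where
  "nu \<Gamma> (Var p) = (if \<exists>L. (L, Var p) \<in> \<Gamma> then lab \<Gamma> (Var p) else Fv)"
| "nu \<Gamma> (Neg a) = (if \<exists>L. (L, Neg a) \<in> \<Gamma> then lab \<Gamma> (Neg a) else pick (mneg (nu \<Gamma> a)))"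
| "nu \<Gamma> (Conj a b) = (if \<exists>L. (L, Conj a b) \<in> \<Gamma> then lab \<Gamma> (Conj a b) else pick (mand (nu \<Gamma> a) (nu \<Gamma> b)))"
| "nu \<Gamma> (Disj a b) = (if \<exists>L. (L, Disj a b) \<in> \<Gamma> then lab \<Gamma> (Disj a b) else pick (mor (nu \<Gamma> a) (nu \<Gamma> b)))"
| "nu \<Gamma> (Imp a b) = (if \<exists>L. (L, Imp a b) \<in> \<Gamma> then lab \<Gamma> (Imp a b) else pick (mimp (nu \<Gamma> a) (nu \<Gamma> b)))"

lemma pick_neg: "pick (mneg x) \<in> mneg x" by (cases x) (auto simp: pick_def Des_def)
lemma pick_and: "pick (mand x y) \<in> mand x y" by (cases x; cases y) (auto simp: pick_def Des_def)
lemma pick_or: "pick (mor x y) \<in> mor x y" by (cases x; cases y) (auto simp: pick_def Des_def)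
lemma pick_imp: "pick (mimp x y) \<in> mimp x y" by (cases x; cases y) (auto simp: pick_def Des_def)

lemma nu_lab:
  assumes u: "\<forall>L L' \<phi>. (L, \<phi>) \<in> \<Gamma> \<longrightarrow> (L', \<phi>) \<in> \<Gamma> \<longrightarrow> L = L'"
    and "(L, \<phi>) \<in> \<Gamma>"
  shows "nu \<Gamma> \<phi> = L"
proof -
  have "lab \<Gamma> \<phi> = L" unfolding lab_def using assms by (intro the_equality) auto
  then show ?thesis using assms(2) by (cases \<phi>) auto
qed

theorem mainTheorem16:
  fixes \<Gamma> :: "'v sfm set"
  assumes "hintikka \<Gamma>"
  shows "\<exists>\<nu> \<in> FC1. \<forall>L \<phi>. (L, \<phi>) \<in> \<Gamma> \<longrightarrow> \<nu> \<phi> = L"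
proof -
  note H = assms[unfolded hintikka_def, THEN conjunct2]
  note R1 = H
  note h1 = R1[THEN conjunct1]
  note R2 = R1[THEN conjunct2]
  note h2 = R2[THEN conjunct1]
  note R3 = R2[THEN conjunct2]
  note h3 = R3[THEN conjunct1]
  note R4 = R3[THEN conjunct2]
  note h4 = R4[THEN conjunct1]
  note R5 = R4[THEN conjunct2]
  note h5 = R5[THEN conjunct1]
  note R6 = R5[THEN conjunct2]
  note h6 = R6[THEN conjunct1]
  note R7 = R6[THEN conjunct2]
  note h7 = R7[THEN conjunct1]
  note R8 = R7[THEN conjunct2]
  note h8 = R8[THEN conjunct1]
  note R9 = R8[THEN conjunct2]
  note h9 = R9[THEN conjunct1]
  note R10 = R9[THEN conjunct2]
  note h10 = R10[THEN conjunct1]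
  note R11 = R10[THEN conjunct2]
  note h11 = R11[THEN conjunct1]
  note R12 = R11[THEN conjunct2]
  note h12 = R12[THEN conjunct1]
  note R13 = R12[THEN conjunct2]
  note h13 = R13[THEN conjunct1]
  note R14 = R13[THEN conjunct2]
  note h14 = R14
  have u: "\<And>L L' \<phi>. (L, \<phi>) \<in> \<Gamma> \<Longrightarrow> (L', \<phi>) \<in> \<Gamma> \<Longrightarrow> L = L'"
    using h1 by blast
  note NL = nu_lab[OF h1]
  have neg: "nu \<Gamma> (Neg a) \<in> mneg (nu \<Gamma> a)" for a
  proof (cases "\<exists>L. (L, Neg a) \<in> \<Gamma>")
    case True
    then obtain L where L: "(L, Neg a) \<in> \<Gamma>" by blast
    have eqL: "nu \<Gamma> (Neg a) = L" using L by (rule NL)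
    show ?thesis
    proof (cases L)
      case Fv
      then have "(Tv, a) \<in> \<Gamma>" using L h5 by blast
      then show ?thesis using L Fv by (auto simp: Des_def eqL simp del: nu.simps dest!: NL)
    next
      case tv
      then have "(tv, a) \<in> \<Gamma>" using L h4 by blast
      then show ?thesis using L tv by (auto simp: Des_def eqL simp del: nu.simps dest!: NL)
    next
      case Tv
      then have "(Fv, a) \<in> \<Gamma> \<or> (tv, a) \<in> \<Gamma>" using L h3 by blast
      then show ?thesis using L Tv by (auto simp: Des_def eqL simp del: nu.simps dest!: NL)
    qed
  qed (simp add: pick_neg)
  have conj: "nu \<Gamma> (Conj a b) \<in> mand (nu \<Gamma> a) (nu \<Gamma> b)" for a b
  proof (cases "\<exists>L. (L, Conj a b) \<in> \<Gamma>")
    case True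
    then obtain L where L: "(L, Conj a b) \<in> \<Gamma>" by blast
    have eqL: "nu \<Gamma> (Conj a b) = L" using L by (rule NL)
    show ?thesis
    proof (cases L)
      case Fv
      then have "(Fv, a) \<in> \<Gamma> \<or> (Fv, b) \<in> \<Gamma>" using L h8 by blast
      then show ?thesis using L Fv by (cases "nu \<Gamma> a") (auto simp: Des_def eqL simp del: nu.simps dest!: NL)
    next
      case tv
      then have "((Tv, a) \<in> \<Gamma> \<and> (tv, b) \<in> \<Gamma>) \<or> ((tv, a) \<in> \<Gamma> \<and> (Tv, b) \<in> \<Gamma>) \<or>
      ((tv, a) \<in> \<Gamma> \<and> (tv, b) \<in> \<Gamma>)" using L h7 by blast
      then show ?thesis using L tv by (auto simp: Des_def eqL simp del: nu.simps dest!: NL)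
    next
      case Tv
      then have "\<exists>X Y. X \<in> {Tv, tv} \<and> Y \<in> {Tv, tv} \<and> (X, a) \<in> \<Gamma> \<and> (Y, b) \<in> \<Gamma>" using L h6 by blast
      then show ?thesis using L Tv by (auto simp: Des_def eqL simp del: nu.simps dest!: NL)
    qed
  qed (simp add: pick_and)
  have disj: "nu \<Gamma> (Disj a b) \<in> mor (nu \<Gamma> a) (nu \<Gamma> b)" for a b
  proof (cases "\<exists>L. (L, Disj a b) \<in> \<Gamma>")
    case True
    then obtain L where L: "(L, Disj a b) \<in> \<Gamma>" by blast
    have eqL: "nu \<Gamma> (Disj a b) = L" using L by (rule NL)
    show ?thesis
    proof (cases L)
      case Fv
      then have "(Fv, a) \<in> \<Gamma> \<and> (Fv, b) \<in> \<Gamma>" using L h11 by blast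
      then show ?thesis using L Fv by (cases "nu \<Gamma> a"; cases "nu \<Gamma> b"; auto simp: Des_def eqL simp del: nu.simps dest!: NL)
    next
      case tv
      then have "(tv, a) \<in> \<Gamma> \<or> (tv, b) \<in> \<Gamma>" using L h10 by blast
      then show ?thesis using L tv by (cases "nu \<Gamma> a"; cases "nu \<Gamma> b"; auto simp: Des_def eqL simp del: nu.simps dest!: NL)
    next
      case Tv
      then have "(Tv, a) \<in> \<Gamma> \<or> (tv, a) \<in> \<Gamma> \<or> (Tv, b) \<in> \<Gamma> \<or> (tv, b) \<in> \<Gamma>" using L h9 by blast
      then show ?thesis using L Tv by (cases "nu \<Gamma> a"; cases "nu \<Gamma> b"; auto simp: Des_def eqL simp del: nu.simps dest!: NL)
    qed
  qed (simp add: pick_or)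
  have imp: "nu \<Gamma> (Imp a b) \<in> mimp (nu \<Gamma> a) (nu \<Gamma> b)" for a b
  proof (cases "\<exists>L. (L, Imp a b) \<in> \<Gamma>")
    case True
    then obtain L where L: "(L, Imp a b) \<in> \<Gamma>" by blast
    have eqL: "nu \<Gamma> (Imp a b) = L" using L by (rule NL)
    show ?thesis
    proof (cases L)
      case Fv
      then have "((Tv, a) \<in> \<Gamma> \<and> (Fv, b) \<in> \<Gamma>) \<or> ((tv, a) \<in> \<Gamma> \<and> (Fv, b) \<in> \<Gamma>)" using L h14 by blast
      then show ?thesis using L Fv by (cases "nu \<Gamma> a"; cases "nu \<Gamma> b"; auto simp: Des_def eqL simp del: nu.simps dest!: NL)
    next
      case tv
      then have "((tv, a) \<in> \<Gamma> \<and> (Tv, b) \<in> \<Gamma>) \<or> (tv, b) \<in> \<Gamma>" using L h13 by blast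
      then show ?thesis using L tv by (cases "nu \<Gamma> a"; cases "nu \<Gamma> b"; auto simp: Des_def eqL simp del: nu.simps dest!: NL)
    next
      case Tv
      then have "(Fv, a) \<in> \<Gamma> \<or> (Tv, b) \<in> \<Gamma> \<or> (tv, b) \<in> \<Gamma>" using L h12 by blast
      then show ?thesis using L Tv by (cases "nu \<Gamma> a"; cases "nu \<Gamma> b"; auto simp: Des_def eqL simp del: nu.simps dest!: NL)
    qed
  qed (simp add: pick_imp)
  have restr: "nu \<Gamma> (Conj a (Neg a)) = Tv" if t: "nu \<Gamma> a = tv" for a
  proof (cases "\<exists>L. (L, Conj a (Neg a)) \<in> \<Gamma>")
    case True
    then obtain L where L: "(L, Conj a (Neg a)) \<in> \<Gamma>" by blast
    have eqL: "nu \<Gamma> (Conj a (Neg a)) = L" using L by (rule NL)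
    have "L \<noteq> tv" using L h2 by blast
    moreover have "L \<noteq> Fv"
    proof
      assume "L = Fv"
      then have "(Fv, a) \<in> \<Gamma> \<or> (Fv, Neg a) \<in> \<Gamma>" using L h8 by blast
      then have "(Fv, a) \<in> \<Gamma> \<or> (Tv, a) \<in> \<Gamma>" using h5 by blast
      then show False using t by (auto dest!: NL)
    qed
    ultimately have "L = Tv" by (cases L) auto
    then show ?thesis using NL[OF L] by simp
  next
    case False
    have "nu \<Gamma> (Neg a) \<in> Des" using neg[of a] t by simp
    moreover have "nu \<Gamma> (Conj a (Neg a)) = pick (mand (nu \<Gamma> a) (nu \<Gamma> (Neg a)))"
      using False by (simp only: nu.simps(3) if_False)
    moreover have "\<forall>x\<in>Des. pick (mand tv x) = Tv" by (auto simp: Des_def pick_def)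
    ultimately show ?thesis using t by (simp del: nu.simps)
  qed
  have "nu \<Gamma> \<in> FC1" unfolding FC1_def valuation_def using neg conj disj imp restr by blast
  then show ?thesis using NL by blast
qed

end
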